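(* Let $G(\lambda)\in\mathbb F(\lambda)^{p\times m}$ and let $L(\lambda)=\begin{bmatrix} A_1\lambda+A_0 & B_1\lambda+B_0\\ -(C_1\lambda+C_0) & D_1\lambda+D_0\end{bmatrix}$, with $A_1\lambda+A_0$ of size $n\times n$, be a linearization of $G(\lambda)$ with transfer function matrix $\widehat G(\lambda)=(D_1\lambda+D_0)+(C_1\lambda+C_0)(A_1\lambda+A_0)^{-1}(B_1\lambda+B_0)\in\mathbb F(\lambda)^{(p+s)\times(m+s)}$. Let $U(\lambda)\in\mathbb F[\lambda]^{(p+s)\times(p+s)}$ and $V(\lambda)\in\mathbb F[\lambda]^{(m+s)\times(m+s)}$ be unimodular with $U(\lambda)\widehat G(\lambda)V(\lambda)=\operatorname{Diag}(G(\lambda),I_s)$. (a) $\begin{bmatrix}H_1(\lambda)\\H_2(\lambda)\end{bmatrix}$ (with $H_1$ having $n$ rows) is a right polynomial basis of $L(\lambda)$ if and only if $H_2(\lambda)=V(\lambda)\begin{bmatrix}H(\lambda)\\0\end{bmatrix}$ for some right polynomial basis $H(\lambda)$ of $G(\lambda)$ and $H_1(\lambda)=-(A_1\lambda+A_0)^{-1}(B_1\lambda+B_0)H_2(\lambda)$. (b) $\begin{bmatrix}H_1(\lambda)\\H_2(\lambda)\end{bmatrix}$ is a left polynomial basis of $L(\lambda)$ if and only if $H_2(\lambda)=U(\lambda)^T\begin{bmatrix}H(\lambda)\\0\end{bmatrix}$ for some left polynomial basis $H(\lambda)$ of $G(\lambda)$ and $H_1(\lambda)=((C_1\lambda+C_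0)(A_1\lambda+A_0)^{-1})^TH_2(\lambda)$.
   Context: $\mathbb F$ is an arbitrary field. A polynomial system matrix $\begin{bmatrix} A(\lambda) & B(\lambda)\\ -C(\lambda) & D(\lambda)\end{bmatrix}$ ($A$ square regular) has transfer function $D+CA^{-1}B$; it is minimal if $A,B$ are left coprime and $A,C$ right coprime (coprime meaning all common one-sided divisors are unimodular). A pencil $L(\lambda)$ as in the claim is a linearization of $G(\lambda)$ if it is a minimal polynomial system matrix of a rational matrix $\widehat G(\lambda)$ such that $\operatorname{Diag}(\widehat G(\lambda))$ and $\operatorname{Diag}(G(\lambda),I_s)$ are unimodularly equivalent for some $s\ge 0$. A right (left) polynomial basis of a rational matrix $G$ is a polynomial matrix whose columns form a basis of $\mathcal N_r(G)=\{x:Gx=0\}$ ($\mathcal N_\ell(G)=\{x:x^TG=0\}$). *)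

theory Defs
  imports "Jordan_Normal_Form.Gauss_Jordan_Elimination" "Jordan_Normal_Form.Determinant"
          "HOL-Computational_Algebra.Fraction_Field" "HOL-Computational_Algebra.Polynomial"
begin

text \<open>Matrices (polynomial or rational) are all represented as matrices over this field;
  a polynomial matrix is one whose entries are (embedded) polynomials.\<close>

type_synonym 'a rf = "'a poly fract"

definition poly_mat :: "'a::field rf mat \<Rightarrow> bool" where
  "poly_mat M \<longleftrightarrow> (\<forall>i < dim_row M. \<forall>j < dim_col M. \<exists>q. M $$ (i,j) = to_fract q)"

definition pencil :: "'a::field mat \<Rightarrow> 'a mat \<Rightarrow> 'a rf mat" where
  "pencil M1 M0 = mat (dim_row M0) (dim_col M0) (\<lambda>(i,j). to_fract [:M0 $$ (i,j), M1 $$ (i,j):])"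

definition unimodular :: "'a::field rf mat \<Rightarrow> bool" where
  "unimodular M \<longleftrightarrow> poly_mat M \<and> dim_row M = dim_col M \<and>
     (\<exists>W. poly_mat W \<and> W \<in> carrier_mat (dim_row M) (dim_row M) \<and>
          M * W = 1\<^sub>m (dim_row M) \<and> W * M = 1\<^sub>m (dim_row M))"

definition unimod_equiv :: "'a::field rf mat \<Rightarrow> 'a rf mat \<Rightarrow> bool" where
  "unimod_equiv P Q \<longleftrightarrow> (\<exists>X Y. unimodular X \<and> unimodular Y \<and>
      X \<in> carrier_mat (dim_row P) (dim_row P) \<and> Y \<in> carrier_mat (dim_col P) (dim_col P) \<and>
      X * P * Y = Q)"

definition minv :: "'a::field mat \<Rightarrow> 'a mat" where
  "minv A = the (mat_inverse A)"

definition left_coprime :: "'a::field rf mat \<Rightarrow> 'a rf mat \<Rightarrow> bool" where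
  "left_coprime A B \<longleftrightarrow> (\<forall>X A' B'. poly_mat X \<and> poly_mat A' \<and> poly_mat B' \<and>
      X \<in> carrier_mat (dim_row A) (dim_row A) \<and> A' \<in> carrier_mat (dim_row A) (dim_col A) \<and>
      B' \<in> carrier_mat (dim_row A) (dim_col B) \<and> A = X * A' \<and> B = X * B' \<longrightarrow> unimodular X)"

definition right_coprime :: "'a::field rf mat \<Rightarrow> 'a rf mat \<Rightarrow> bool" where
  "right_coprime A C \<longleftrightarrow> (\<forall>X A' C'. poly_mat X \<and> poly_mat A' \<and> poly_mat C' \<and>
      X \<in> carrier_mat (dim_col A) (dim_col A) \<and> A' \<in> carrier_mat (dim_row A) (dim_col A) \<and>
      C' \<in> carrier_mat (dim_row C) (dim_col A) \<and> A = A' * X \<and> C = C' * X \<longrightarrow> unimodular X)"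

definition transfer :: "'a::field rf mat \<Rightarrow> 'a rf mat \<Rightarrow> 'a rf mat \<Rightarrow> 'a rf mat \<Rightarrow> 'a rf mat" where
  "transfer A B C D = D + C * minv A * B"

definition minimal_psm :: "'a::field rf mat \<Rightarrow> 'a rf mat \<Rightarrow> 'a rf mat \<Rightarrow> 'a rf mat \<Rightarrow> bool" where
  "minimal_psm A B C D \<longleftrightarrow> poly_mat A \<and> poly_mat B \<and> poly_mat C \<and> poly_mat D \<and>
     dim_row A = dim_col A \<and> det A \<noteq> 0 \<and> left_coprime A B \<and> right_coprime A C"

definition diag2 :: "'a::zero mat \<Rightarrow> 'a mat \<Rightarrow> 'a mat" where
  "diag2 P Q = four_block_mat P (0\<^sub>m (dim_row P) (dim_col Q)) (0\<^sub>m (dim_row Q) (dim_col P)) Q"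

definition linearization ::
  "'a::field rf mat \<Rightarrow> 'a mat \<Rightarrow> 'a mat \<Rightarrow> 'a mat \<Rightarrow> 'a mat \<Rightarrow> 'a mat \<Rightarrow> 'a mat \<Rightarrow> 'a mat \<Rightarrow> 'a mat \<Rightarrow> bool" where
  "linearization G A1 A0 B1 B0 C1 C0 D1 D0 \<longleftrightarrow>
     minimal_psm (pencil A1 A0) (pencil B1 B0) (pencil C1 C0) (pencil D1 D0) \<and>
     (\<exists>s. unimod_equiv (transfer (pencil A1 A0) (pencil B1 B0) (pencil C1 C0) (pencil D1 D0))
                        (diag2 G (1\<^sub>m s)))"

definition right_poly_basis :: "'a::field rf mat \<Rightarrow> 'a rf mat \<Rightarrow> bool" where
  "right_poly_basis G H \<longleftrightarrow> poly_mat H \<and> dim_row H = dim_col G \<and>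
     G * H = 0\<^sub>m (dim_row G) (dim_col H) \<and>
     (\<forall>y \<in> carrier_vec (dim_col H). H *\<^sub>v y = 0\<^sub>v (dim_row H) \<longrightarrow> y = 0\<^sub>v (dim_col H)) \<and>
     (\<forall>x \<in> carrier_vec (dim_col G). G *\<^sub>v x = 0\<^sub>v (dim_row G) \<longrightarrow>
        (\<exists>y \<in> carrier_vec (dim_col H). x = H *\<^sub>v y))"

text \<open>Left null space {x. x^T G = 0} is the right null space of G^T.\<close>
definition left_poly_basis :: "'a::field rf mat \<Rightarrow> 'a rf mat \<Rightarrow> bool" where
  "left_poly_basis G H \<longleftrightarrow> right_poly_basis (transpose_mat G) H"

end

theory Submission
  imports Defs
begin


definition isp :: "'a::field rf \<Rightarrow> bool" where "isp x \<longleftrightarrow> (\<exists>q. x = to_fract q)"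
definition poly_vec :: "'a::field rf vec \<Rightarrow> bool" where
  "poly_vec v \<longleftrightarrow> (\<forall>i < dim_vec v. isp (v $ i))"

lemma isp_to_fract[simp, intro]: "isp (to_fract q)" unfolding isp_def by auto
lemma isp_0[simp, intro]: "isp 0" using isp_to_fract[of 0] by simp
lemma isp_1[simp, intro]: "isp 1" using isp_to_fract[of 1] by simp
lemma isp_add[intro]: "isp x \<Longrightarrow> isp y \<Longrightarrow> isp (x + y)"
  unfolding isp_def by (auto intro: exI[of _ "_ + _"])
lemma isp_mult[intro]: "isp x \<Longrightarrow> isp y \<Longrightarrow> isp (x * y)"
  unfolding isp_def by (auto intro: exI[of _ "_ * _"])
lemma isp_uminus[intro]: "isp x \<Longrightarrow> isp (- x)"
  unfolding isp_def by (auto intro: exI[of _ "- _"])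
lemma isp_minus[intro]: "isp x \<Longrightarrow> isp y \<Longrightarrow> isp (x - y)"
  unfolding isp_def by (auto intro: exI[of _ "_ - _"])
lemma isp_sum[intro]: "(\<And>x. x \<in> S \<Longrightarrow> isp (f x)) \<Longrightarrow> isp (sum f S)"
  by (induction S rule: infinite_finite_induct) auto

lemma poly_mat_iff: "poly_mat M \<longleftrightarrow> (\<forall>i < dim_row M. \<forall>j < dim_col M. isp (M $$ (i,j)))"
  unfolding poly_mat_def isp_def by auto

lemma poly_vec_mult:
  assumes "poly_mat M" "poly_vec v" "dim_vec v = dim_col M"
  shows "poly_vec (M *\<^sub>v v)"
  using assms unfolding poly_vec_def poly_mat_iff
  by (auto simp: mult_mat_vec_def scalar_prod_def intro!: isp_sum isp_mult)

lemma poly_mat_mult: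
  assumes "poly_mat M" "poly_mat N" "dim_col M = dim_row N"
  shows "poly_mat (M * N)"
  using assms unfolding poly_mat_iff
  by (auto simp: times_mat_def scalar_prod_def intro!: isp_sum isp_mult)

lemma poly_mat_add:
  assumes "poly_mat M" "poly_mat N" "dim_row M = dim_row N" "dim_col M = dim_col N"
  shows "poly_mat (M + N)"
  using assms unfolding poly_mat_iff by auto

lemma poly_mat_uminus: "poly_mat M \<Longrightarrow> poly_mat (- M)"
  unfolding poly_mat_iff by auto

lemma poly_mat_transpose: "poly_mat M \<Longrightarrow> poly_mat (transpose_mat M)"
  unfolding poly_mat_iff by auto

lemma poly_mat_cols: "poly_mat M \<longleftrightarrow> (\<forall>j < dim_col M. poly_vec (col M j))"
  unfolding poly_mat_iff poly_vec_def by auto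

lemma poly_vec_col: "poly_mat M \<Longrightarrow> j < dim_col M \<Longrightarrow> poly_vec (col M j)"
  unfolding poly_mat_cols by auto

lemma poly_mat_zero[simp]: "poly_mat (0\<^sub>m a b)" unfolding poly_mat_iff by auto
lemma poly_mat_one[simp]: "poly_mat (1\<^sub>m a)" unfolding poly_mat_iff by auto

lemma poly_mat_pencil: "poly_mat (pencil M1 M0)"
  unfolding poly_mat_def pencil_def by auto




lemma sum_split_i:
  fixes i n :: nat
  assumes "i < n"
  shows "(\<Sum>j = 0..<n. f j) = f i + (\<Sum>j \<in> {0..<n} - {i}. f j)"
proof -
  have "i \<in> {0..<n}" using assms by auto
  thus ?thesis by (rule sum.remove[of "{0..<n}" i f, OF finite_atLeastLessThan])
qed

lemma rep_mult_X:
  fixes M :: "'a::field mat"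
  assumes M: "M \<in> carrier_mat k n" and z: "z \<in> carrier_vec n" and i: "i < n"
    and zi: "z $ i = 1" and p: "p \<noteq> 0"
  shows "M = mat k n (\<lambda>(r,l). if l = i then (M *\<^sub>v z) $ r / p else M $$ (r,l)) *
             mat n n (\<lambda>(j,l). if l = i then (if j = i then p else - z $ j) else (if j = l then 1 else 0))"
    (is "M = ?R * ?X")
proof (rule eq_matI)
  show "dim_row M = dim_row (?R * ?X)" "dim_col M = dim_col (?R * ?X)" using M by auto
  fix r l assume r: "r < dim_row (?R * ?X)" and l: "l < dim_col (?R * ?X)"
  hence r: "r < k" and l: "l < n" by auto
  have "(?R * ?X) $$ (r,l) = (\<Sum>j = 0..<n. ?R $$ (r,j) * ?X $$ (j,l))"
    using r l by (simp add: times_mat_def scalar_prod_def)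
  also have "\<dots> = M $$ (r,l)"
  proof (cases "l = i")
    case True
    have mz: "(M *\<^sub>v z) $ r = (\<Sum>j = 0..<n. M $$ (r,j) * z $ j)"
      using M z r by (simp add: mult_mat_vec_def scalar_prod_def)
    have "(\<Sum>j = 0..<n. ?R $$ (r,j) * ?X $$ (j,l)) =
       ?R $$ (r,i) * ?X $$ (i,l) + (\<Sum>j \<in> {0..<n} - {i}. ?R $$ (r,j) * ?X $$ (j,l))"
      by (rule sum_split_i[OF i])
    also have "(\<Sum>j \<in> {0..<n} - {i}. ?R $$ (r,j) * ?X $$ (j,l)) = (\<Sum>j \<in> {0..<n} - {i}. - (M $$ (r,j) * z $ j))"
      by (rule sum.cong, insert r True i, auto)
    also have "?R $$ (r,i) * ?X $$ (i,l) = (M *\<^sub>v z) $ r"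
      using r i p True by auto
    also have "(M *\<^sub>v z) $ r = M $$ (r,i) * z $ i + (\<Sum>j \<in> {0..<n} - {i}. M $$ (r,j) * z $ j)"
      unfolding mz by (rule sum_split_i[OF i])
    finally show ?thesis using zi True by (simp add: sum_negf)
  next
    case False
    have "(\<Sum>j = 0..<n. ?R $$ (r,j) * ?X $$ (j,l)) = (\<Sum>j = 0..<n. if j = l then M $$ (r,l) else 0)"
      by (rule sum.cong, insert r l False, auto)
    also have "\<dots> = M $$ (r,l)" using l by simp
    finally show ?thesis .
  qed
  finally show "M $$ (r,l) = (?R * ?X) $$ (r,l)" by simp
qed

lemma X_mult_v:
  fixes z :: "'a::field vec"
  assumes z: "z \<in> carrier_vec n" and i: "i < n" and zi: "z $ i = 1" and p: "p \<noteq> 0"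
  shows "mat n n (\<lambda>(j,l). if l = i then (if j = i then p else - z $ j) else (if j = l then 1 else 0))
     *\<^sub>v vec n (\<lambda>j. z $ j / p) = unit_vec n i" (is "?X *\<^sub>v ?v = _")
proof (rule eq_vecI)
  show "dim_vec (?X *\<^sub>v ?v) = dim_vec (unit_vec n i)" by simp
  fix j assume "j < dim_vec (unit_vec n i)"
  hence j: "j < n" by simp
  have "(?X *\<^sub>v ?v) $ j = (\<Sum>l = 0..<n. ?X $$ (j,l) * ?v $ l)"
    using j by (simp add: mult_mat_vec_def scalar_prod_def)
  also have "\<dots> = ?X $$ (j,i) * ?v $ i + (\<Sum>l \<in> {0..<n} - {i}. ?X $$ (j,l) * ?v $ l)"
    by (rule sum_split_i[OF i])
  also have "(\<Sum>l \<in> {0..<n} - {i}. ?X $$ (j,l) * ?v $ l) = (\<Sum>l \<in> {0..<n} - {i}. if l = j then ?v $ j else 0)"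
    by (rule sum.cong, insert j, auto)
  also have "\<dots> = (if j \<noteq> i then ?v $ j else 0)" using j by (simp add: sum.delta)
  finally show "(?X *\<^sub>v ?v) $ j = unit_vec n i $ j"
    using j i p zi by auto
qed

lemma not_right_coprime:
  fixes A C :: "'a::field rf mat" and \<pi> :: "'a poly"
  assumes A: "A \<in> carrier_mat n n" and C: "C \<in> carrier_mat r n"
    and pA: "poly_mat A" and pC: "poly_mat C"
    and pr: "degree \<pi> > 0" and i: "i < n" and z: "z \<in> carrier_vec n" "poly_vec z" and zi: "z $ i = 1"
    and dA: "\<And>l. l < n \<Longrightarrow> \<exists>q. (A *\<^sub>v z) $ l = to_fract \<pi> * to_fract q"
    and dC: "\<And>l. l < r \<Longrightarrow> \<exists>q. (C *\<^sub>v z) $ l = to_fract \<pi> * to_fract q"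
  shows "\<not> right_coprime A C"
proof
  assume cop: "right_coprime A C"
  define p where "p = to_fract \<pi>"
  have p: "p \<noteq> 0" using pr unfolding p_def by (cases "\<pi> = 0") auto
  define X where "X = mat n n (\<lambda>(j,l). if l = i then (if j = i then p else - z $ j) else (if j = l then (1::'a rf) else 0))"
  define RA where "RA = mat n n (\<lambda>(r,l). if l = i then (A *\<^sub>v z) $ r / p else A $$ (r,l))"
  define RC where "RC = mat r n (\<lambda>(r,l). if l = i then (C *\<^sub>v z) $ r / p else C $$ (r,l))"
  have eA: "A = RA * X" unfolding RA_def X_def by (rule rep_mult_X[OF A z(1) i zi p])
  have eC: "C = RC * X" unfolding RC_def X_def by (rule rep_mult_X[OF C z(1) i zi p])
  have pX: "poly_mat X" unfolding poly_mat_iff X_def p_def using z unfolding poly_vec_def by auto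
  have pRA: "poly_mat RA" unfolding poly_mat_iff RA_def
  proof (intro allI impI)
    fix a b assume "a < dim_row (mat n n (\<lambda>(r,l). if l = i then (A *\<^sub>v z) $ r / p else A $$ (r,l)))"
       "b < dim_col (mat n n (\<lambda>(r,l). if l = i then (A *\<^sub>v z) $ r / p else A $$ (r,l)))"
    hence ab: "a < n" "b < n" by auto
    show "isp (mat n n (\<lambda>(r,l). if l = i then (A *\<^sub>v z) $ r / p else A $$ (r,l)) $$ (a,b))"
    proof (cases "b = i")
      case True
      from dA[OF ab(1)] obtain q where "(A *\<^sub>v z) $ a = p * to_fract q" unfolding p_def by auto
      thus ?thesis using ab True p by auto
    next
      case False thus ?thesis using ab pA A unfolding poly_mat_iff by auto
    qed
  qed
  have pRC: "poly_mat RC" unfolding poly_mat_iff RC_def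
  proof (intro allI impI)
    fix a b assume "a < dim_row (mat r n (\<lambda>(r,l). if l = i then (C *\<^sub>v z) $ r / p else C $$ (r,l)))"
       "b < dim_col (mat r n (\<lambda>(r,l). if l = i then (C *\<^sub>v z) $ r / p else C $$ (r,l)))"
    hence ab: "a < r" "b < n" by auto
    show "isp (mat r n (\<lambda>(r,l). if l = i then (C *\<^sub>v z) $ r / p else C $$ (r,l)) $$ (a,b))"
    proof (cases "b = i")
      case True
      from dC[OF ab(1)] obtain q where "(C *\<^sub>v z) $ a = p * to_fract q" unfolding p_def by auto
      thus ?thesis using ab True p by auto
    next
      case False thus ?thesis using ab pC C unfolding poly_mat_iff by auto
    qed
  qed
  have "unimodular X"
    using cop[unfolded right_coprime_def, rule_format, of X RA RC] pX pRA pRC eA eC A C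
    unfolding X_def RA_def RC_def by auto
  then obtain W where W: "poly_mat W" "W \<in> carrier_mat n n" "W * X = 1\<^sub>m n"
    unfolding unimodular_def X_def by auto
  define v where "v = vec n (\<lambda>j. z $ j / p)"
  have Xv: "X *\<^sub>v v = unit_vec n i" unfolding X_def v_def by (rule X_mult_v[OF z(1) i zi p])
  have X: "X \<in> carrier_mat n n" unfolding X_def by auto
  have Wv: "W *\<^sub>v unit_vec n i = v"
    unfolding Xv[symmetric] using W X by (simp add: assoc_mult_mat_vec[symmetric] v_def)
  have "poly_vec (W *\<^sub>v unit_vec n i)"
    by (rule poly_vec_mult[OF W(1)], insert W, auto simp: poly_vec_def unit_vec_def)
  hence "poly_vec v" using Wv by simp
  hence "isp (v $ i)" using i unfolding poly_vec_def v_def by auto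
  then obtain q where "1 / p = to_fract q" unfolding v_def isp_def using i zi by auto
  hence "to_fract (\<pi> * q) = 1" using p unfolding p_def by (simp add: field_simps)
  hence "\<pi> * q = 1" using to_fract_eq_iff[of "\<pi> * q" 1] by simp
  hence "degree (\<pi> * q) = 0" by simp
  moreover have "q \<noteq> 0" "\<pi> \<noteq> 0" using \<open>\<pi> * q = 1\<close> by auto
  ultimately show False using pr by (simp add: degree_mult_eq)
qed




lemma poly_bezout:
  fixes a b :: "'a::field poly"
  shows "\<exists>u v g. g = u * a + v * b \<and> g dvd a \<and> g dvd b"
proof (induction "degree b" arbitrary: a b rule: less_induct)
  case less
  show ?case
  proof (cases "b = 0")
    case True
    show ?thesis by (rule exI[of _ 1], rule exI[of _ 0], rule exI[of _ a], auto simp: True)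
  next
    case b: False
    show ?thesis
    proof (cases "a mod b = 0")
      case True
      show ?thesis by (rule exI[of _ 0], rule exI[of _ 1], rule exI[of _ b], insert True, auto simp: mod_eq_0_iff_dvd)
    next
      case False
      hence "degree (a mod b) < degree b" using degree_mod_less'[OF b] by auto
      from less[OF this, of b] obtain u v g where g: "g = u * b + v * (a mod b)" "g dvd b" "g dvd a mod b"
        by auto
      have a: "a = a div b * b + a mod b" by simp
      have "g dvd a div b * b + a mod b" using g(2,3) by (intro dvd_add dvd_mult) auto
      hence "g dvd a" by simp
      moreover have "g = v * a + (u - v * (a div b)) * b"
      proof -
        have "v * a = v * (a div b * b) + v * (a mod b)" by (metis a distrib_left)
        thus ?thesis unfolding g(1) by (simp add: algebra_simps)
      qed
      ultimately show ?thesis using g by blast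
    qed
  qed
qed

lemma common_denom:
  fixes x :: "'a::field rf vec"
  shows "\<exists>d. d \<noteq> 0 \<and> poly_vec (to_fract d \<cdot>\<^sub>v x)"
proof -
  have "\<forall>j. \<exists>ab. snd ab \<noteq> 0 \<and> x $ j = to_fract (fst ab) / to_fract (snd ab)"
  proof
    fix j
    obtain a b where "x $ j = Fract a b" "b \<noteq> 0" by (cases "x $ j")
    thus "\<exists>ab. snd ab \<noteq> 0 \<and> x $ j = to_fract (fst ab) / to_fract (snd ab)"
      by (intro exI[of _ "(a,b)"], auto simp: Fract_conv_to_fract)
  qed
  then obtain f where f: "\<And>j. snd (f j) \<noteq> 0" "\<And>j. x $ j = to_fract (fst (f j)) / to_fract (snd (f j))"
    by metis
  define n where "n = dim_vec x"
  define d where "d = (\<Prod>j\<in>{..<n}. snd (f j))"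
  have d: "d \<noteq> 0" unfolding d_def using f(1) by auto
  have "poly_vec (to_fract d \<cdot>\<^sub>v x)" unfolding poly_vec_def
  proof (intro allI impI)
    fix j assume "j < dim_vec (to_fract d \<cdot>\<^sub>v x)"
    hence j: "j < n" unfolding n_def by auto
    define rest where "rest = (\<Prod>l\<in>{..<n} - {j}. snd (f l))"
    have "d = snd (f j) * rest" unfolding d_def rest_def using j by (subst prod.remove[of _ j]) auto
    hence "(to_fract d \<cdot>\<^sub>v x) $ j = to_fract (snd (f j)) * to_fract rest * (to_fract (fst (f j)) / to_fract (snd (f j)))"
      using j f(2)[of j] unfolding n_def by simp
    also have "\<dots> = to_fract (rest * fst (f j))" using f(1)[of j] by simp
    finally show "isp ((to_fract d \<cdot>\<^sub>v x) $ j)" by (simp add: isp_mult)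
  qed
  thus ?thesis using d by auto
qed

lemma div_lemma:
  fixes M :: "'a::field rf mat"
  assumes M: "M \<in> carrier_mat k n" and pM: "poly_mat M" and pMx: "poly_vec (M *\<^sub>v x)"
    and x: "x \<in> carrier_vec n" and i: "i < n" and d: "d = \<pi> * d'" and l: "l < k"
  shows "\<exists>q. (M *\<^sub>v (to_fract (u * d) \<cdot>\<^sub>v x + to_fract (v * \<pi>) \<cdot>\<^sub>v unit_vec n i)) $ l = to_fract \<pi> * to_fract q"
proof -
  have "M *\<^sub>v (to_fract (u * d) \<cdot>\<^sub>v x + to_fract (v * \<pi>) \<cdot>\<^sub>v unit_vec n i)
     = to_fract (u * d) \<cdot>\<^sub>v (M *\<^sub>v x) + to_fract (v * \<pi>) \<cdot>\<^sub>v (M *\<^sub>v unit_vec n i)"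
    using M x by (simp add: mult_add_distrib_mat_vec mult_mat_vec)
  moreover have "(M *\<^sub>v unit_vec n i) $ l = M $$ (l,i)" using M l i by simp
  moreover obtain a where "(M *\<^sub>v x) $ l = to_fract a" using pMx l M unfolding poly_vec_def isp_def by auto
  moreover obtain m where "M $$ (l,i) = to_fract m" using pM l i M unfolding poly_mat_def by auto
  ultimately have "(M *\<^sub>v (to_fract (u * d) \<cdot>\<^sub>v x + to_fract (v * \<pi>) \<cdot>\<^sub>v unit_vec n i)) $ l
     = to_fract (u * d) * to_fract a + to_fract (v * \<pi>) * to_fract m" using M l by simp
  also have "\<dots> = to_fract \<pi> * to_fract (u * d' * a + v * m)" unfolding d by (simp add: algebra_simps)
  finally show ?thesis by blast
qed




lemma key_coprime:
  fixes A C :: "'a::field rf mat"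
  assumes A: "A \<in> carrier_mat n n" and C: "C \<in> carrier_mat r n"
    and pA: "poly_mat A" and pC: "poly_mat C" and cop: "right_coprime A C"
    and x: "x \<in> carrier_vec n" and pAx: "poly_vec (A *\<^sub>v x)" and pCx: "poly_vec (C *\<^sub>v x)"
  shows "poly_vec x"
proof -
  have main: "d \<noteq> 0 \<Longrightarrow> poly_vec (to_fract d \<cdot>\<^sub>v x) \<Longrightarrow> poly_vec x" for d
  proof (induction "degree d" arbitrary: d rule: less_induct)
    case less
    have dx: "\<exists>q. to_fract d * x $ j = to_fract q" if "j < n" for j
      using less.prems(2) that x unfolding poly_vec_def isp_def by auto
    show ?case
    proof (cases "degree d = 0")
      case True
      define c where "c = coeff d 0"
      have dc: "d = [:c:]" unfolding c_def using True by (rule degree_0_id[symmetric])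
      have c: "c \<noteq> 0" using less.prems(1) dc by auto
      show ?thesis unfolding poly_vec_def
      proof (intro allI impI)
        fix j assume "j < dim_vec x"
        hence j: "j < n" using x by auto
        obtain q where q: "to_fract d * x $ j = to_fract q" using dx[OF j] by auto
        have "[:1/c:] * d = 1" unfolding dc using c by (simp add: one_pCons)
        hence "x $ j = to_fract ([:1/c:] * d) * x $ j" by simp
        also have "\<dots> = to_fract [:1/c:] * (to_fract d * x $ j)" by (simp only: to_fract_mult mult.assoc)
        also have "\<dots> = to_fract ([:1/c:] * q)" by (simp only: q to_fract_mult)
        finally show "isp (x $ j)" by simp
      qed
    next
      case False
      define P where "P = (\<lambda>k. \<exists>\<pi>. \<pi> dvd d \<and> degree \<pi> = k \<and> 0 < k)"
      have "P (degree d)" unfolding P_def using False by (intro exI[of _ d]) auto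
      hence "P (LEAST k. P k)" by (rule LeastI)
      then obtain \<pi> where \<pi>: "\<pi> dvd d" "0 < degree \<pi>" and \<pi>l: "degree \<pi> = (LEAST k. P k)"
        unfolding P_def by auto
      have \<pi>min: "degree \<pi> \<le> degree g" if "g dvd d" "0 < degree g" for g
        unfolding \<pi>l unfolding \<pi>l by (rule Least_le, unfold P_def, rule exI[of _ g], insert that, auto)
      from \<pi>(1) obtain d' where d': "d = \<pi> * d'" by (auto simp: dvd_def)
      have \<pi>0: "\<pi> \<noteq> 0" using \<pi>(2) by auto
      have d'0: "d' \<noteq> 0" using d' less.prems(1) by auto
      obtain y where y: "\<And>j. j < n \<Longrightarrow> to_fract d * x $ j = to_fract (y j)" using dx by metis
      show ?thesis
      proof (cases "\<forall>j < n. \<pi> dvd y j")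
        case True
        have deg: "degree d' < degree d" unfolding d' using \<pi>(2) \<pi>0 d'0 by (simp add: degree_mult_eq)
        have "poly_vec (to_fract d' \<cdot>\<^sub>v x)" unfolding poly_vec_def
        proof (intro allI impI)
          fix j assume "j < dim_vec (to_fract d' \<cdot>\<^sub>v x)"
          hence j: "j < n" using x by auto
          obtain w where w: "y j = \<pi> * w" using True j by (auto simp: dvd_def)
          have "to_fract \<pi> * (to_fract d' * x $ j) = to_fract \<pi> * to_fract w"
            using y[OF j] unfolding w d' by (simp add: mult.assoc)
          hence "to_fract d' * x $ j = to_fract w" using \<pi>0 by simp
          thus "isp ((to_fract d' \<cdot>\<^sub>v x) $ j)" using j x by simp
        qed
        from less.hyps[OF deg d'0 this] show ?thesis .
      next
        case False
        then obtain i where i: "i < n" "\<not> \<pi> dvd y i" by auto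
        from poly_bezout[of "y i" \<pi>] obtain u v g where
          g: "g = u * y i + v * \<pi>" "g dvd y i" "g dvd \<pi>" by auto
        have g0: "g \<noteq> 0" using g(3) \<pi>0 by auto
        have "degree g = 0"
        proof (rule ccontr)
          assume "degree g \<noteq> 0"
          hence "degree \<pi> \<le> degree g" using \<pi>min[of g] g(3) \<pi>(1) dvd_trans by blast
          moreover have "degree g \<le> degree \<pi>" using dvd_imp_degree_le[OF g(3) \<pi>0] .
          moreover obtain c where c: "\<pi> = g * c" using g(3) by (auto simp: dvd_def)
          moreover have c00: "c \<noteq> 0" using c \<pi>0 by auto
          moreover have "degree \<pi> = degree g + degree c" unfolding c using g0 c00 by (rule degree_mult_eq)
          ultimately have "degree c = 0" by linarith
          hence c': "c = [:coeff c 0:]" by (rule degree_0_id[symmetric])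
          have c0: "coeff c 0 \<noteq> 0"
          proof
            assume "coeff c 0 = 0"
            hence "c = 0" using c' by simp
            with c00 show False by simp
          qed
          have cinv: "c * [:1 / coeff c 0:] = 1" by (subst c') (simp add: c0 one_pCons)
          have "\<pi> * [:1 / coeff c 0:] = g * (c * [:1/coeff c 0:])" unfolding c by (simp only: mult.assoc)
          hence "g = \<pi> * [:1 / coeff c 0:]" unfolding cinv by simp
          hence "\<pi> dvd g" by (simp only:) (rule dvd_triv_left)
          with g(2) i(2) show False using dvd_trans by blast
        qed
        hence gc: "g = [:coeff g 0:]" by (rule degree_0_id[symmetric])
        define g0 where "g0 = coeff g 0"
        have g00: "g0 \<noteq> 0" using gc g0 unfolding g0_def by auto
        define u' where "u' = [:1/g0:] * u"
        define v' where "v' = [:1/g0:] * v"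
        have bez: "u' * y i + v' * \<pi> = 1"
        proof -
          have "u' * y i + v' * \<pi> = [:1/g0:] * g" unfolding u'_def v'_def g(1) by (simp add: algebra_simps)
          also have "\<dots> = 1" using g00 by (subst gc, unfold g0_def[symmetric], simp add: one_pCons)
          finally show ?thesis .
        qed
        define z where "z = to_fract (u' * d) \<cdot>\<^sub>v x + to_fract (v' * \<pi>) \<cdot>\<^sub>v unit_vec n i"
        have zc: "z \<in> carrier_vec n" unfolding z_def using x by auto
        have zj: "z $ j = to_fract u' * (to_fract d * x $ j) + (if j = i then to_fract (v' * \<pi>) else 0)"
          if "j < n" for j
          unfolding z_def using that x by (auto simp: mult.assoc unit_vec_def)
        have "z $ i = to_fract u' * to_fract (y i) + to_fract (v' * \<pi>)" using zj[OF i(1)] y[OF i(1)] by simp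
        also have "\<dots> = to_fract (u' * y i + v' * \<pi>)" by simp
        also have "\<dots> = 1" using bez by simp
        finally have zi: "z $ i = 1" .
        have pz: "poly_vec z" unfolding poly_vec_def
        proof (intro allI impI)
          fix j assume "j < dim_vec z"
          hence j: "j < n" using zc by auto
          show "isp (z $ j)" unfolding zj[OF j] y[OF j] by (auto intro!: isp_add isp_mult)
        qed
        have dA: "\<exists>q. (A *\<^sub>v z) $ l = to_fract \<pi> * to_fract q" if "l < n" for l
          unfolding z_def by (rule div_lemma[OF A pA pAx x i(1) d' that])
        have dC: "\<exists>q. (C *\<^sub>v z) $ l = to_fract \<pi> * to_fract q" if "l < r" for l
          unfolding z_def by (rule div_lemma[OF C pC pCx x i(1) d' that])
        have "\<not> right_coprime A C"
          by (rule not_right_coprime[OF A C pA pC \<pi>(2) i(1) zc pz zi dA dC])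
        with cop show ?thesis by simp
      qed
    qed
  qed
  from common_denom[of x] obtain d where "d \<noteq> 0" "poly_vec (to_fract d \<cdot>\<^sub>v x)" by auto
  from main[OF this] show ?thesis .
qed




lemma mat_vec_zero[simp]: "A \<in> carrier_mat r c \<Longrightarrow> A *\<^sub>v 0\<^sub>v c = (0\<^sub>v r :: 'a::comm_ring_1 vec)"
  by (intro eq_vecI) (auto simp: mult_mat_vec_def scalar_prod_def)

lemma mat_zero_cols:
  fixes M H :: "'a::comm_ring_1 mat"
  assumes M: "M \<in> carrier_mat r c" and H: "H \<in> carrier_mat c k"
  shows "M * H = 0\<^sub>m r k \<longleftrightarrow> (\<forall>j<k. M *\<^sub>v col H j = 0\<^sub>v r)"
proof
  assume "M * H = 0\<^sub>m r k"
  thus "\<forall>j<k. M *\<^sub>v col H j = 0\<^sub>v r" using col_mult2[OF M H] by (metis col_zero)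
next
  assume a: "\<forall>j<k. M *\<^sub>v col H j = 0\<^sub>v r"
  show "M * H = 0\<^sub>m r k"
  proof (rule mat_col_eqI)
    fix j assume "j < dim_col (0\<^sub>m r k)" hence j: "j < k" by simp
    show "col (M * H) j = col (0\<^sub>m r k) j" using col_mult2[OF M H j] a j by simp
  qed (insert M H, auto)
qed

lemma abstract_basis:
  fixes L G \<Phi> \<Psi> Hf :: "'a::field rf mat"
  assumes L: "L \<in> carrier_mat a b" and G: "G \<in> carrier_mat p m"
    and \<Phi>: "\<Phi> \<in> carrier_mat b m" and \<Psi>: "\<Psi> \<in> carrier_mat m b"
    and h1: "\<And>z. z \<in> carrier_vec m \<Longrightarrow> \<Psi> *\<^sub>v (\<Phi> *\<^sub>v z) = z" and p\<Psi>: "poly_mat \<Psi>"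
    and h2: "\<And>z. z \<in> carrier_vec m \<Longrightarrow> L *\<^sub>v (\<Phi> *\<^sub>v z) = 0\<^sub>v a \<longleftrightarrow> G *\<^sub>v z = 0\<^sub>v p"
    and h3: "\<And>x. x \<in> carrier_vec b \<Longrightarrow> L *\<^sub>v x = 0\<^sub>v a \<Longrightarrow> \<Phi> *\<^sub>v (\<Psi> *\<^sub>v x) = x"
    and h5: "\<And>z. z \<in> carrier_vec m \<Longrightarrow> poly_vec z \<Longrightarrow> G *\<^sub>v z = 0\<^sub>v p \<Longrightarrow> poly_vec (\<Phi> *\<^sub>v z)"
    and Hf: "Hf \<in> carrier_mat b k"
  shows "right_poly_basis L Hf \<longleftrightarrow> (\<exists>H. H \<in> carrier_mat m k \<and> right_poly_basis G H \<and> Hf = \<Phi> * H)"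
proof
  assume rb: "right_poly_basis L Hf"
  hence pHf: "poly_mat Hf" and LH: "L * Hf = 0\<^sub>m a k"
    and ind: "\<And>y. y \<in> carrier_vec k \<Longrightarrow> Hf *\<^sub>v y = 0\<^sub>v b \<Longrightarrow> y = 0\<^sub>v k"
    and sp: "\<And>x. x \<in> carrier_vec b \<Longrightarrow> L *\<^sub>v x = 0\<^sub>v a \<Longrightarrow> \<exists>y \<in> carrier_vec k. x = Hf *\<^sub>v y"
    unfolding right_poly_basis_def using L Hf by auto
  have Lc: "L *\<^sub>v col Hf j = 0\<^sub>v a" if "j < k" for j
    using LH mat_zero_cols[OF L Hf] that by auto
  define H where "H = \<Psi> * Hf"
  have Hc: "H \<in> carrier_mat m k" unfolding H_def using \<Psi> Hf by auto
  have eq: "Hf = \<Phi> * H"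
  proof (rule mat_col_eqI)
    fix j assume "j < dim_col (\<Phi> * H)"
    hence j: "j < k" using Hc by auto
    have "col (\<Phi> * H) j = \<Phi> *\<^sub>v (\<Psi> *\<^sub>v col Hf j)" using col_mult2[OF \<Phi> Hc j] col_mult2[OF \<Psi> Hf j] unfolding H_def by simp
    also have "\<dots> = col Hf j" using h3[OF _ Lc[OF j]] Hf j by auto
    finally show "col Hf j = col (\<Phi> * H) j" by simp
  qed (insert Hf \<Phi> Hc, auto)
  have "right_poly_basis G H" unfolding right_poly_basis_def
  proof (intro conjI ballI impI)
    show "poly_mat H" unfolding H_def by (rule poly_mat_mult[OF p\<Psi> pHf], insert \<Psi> Hf, auto)
    show "dim_row H = dim_col G" using Hc G by auto
    have "G * H = 0\<^sub>m p k" unfolding mat_zero_cols[OF G Hc]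
    proof (intro allI impI)
      fix j assume j: "j < k"
      have "L *\<^sub>v (\<Phi> *\<^sub>v (\<Psi> *\<^sub>v col Hf j)) = 0\<^sub>v a" using h3[OF _ Lc[OF j]] Hf j Lc[OF j] by auto
      moreover have "\<Psi> *\<^sub>v col Hf j \<in> carrier_vec m" using \<Psi> Hf j by auto
      ultimately have "G *\<^sub>v (\<Psi> *\<^sub>v col Hf j) = 0\<^sub>v p" using h2 by blast
      thus "G *\<^sub>v col H j = 0\<^sub>v p" using col_mult2[OF \<Psi> Hf j] unfolding H_def by simp
    qed
    thus "G * H = 0\<^sub>m (dim_row G) (dim_col H)" using G Hc by auto
  next
    fix y assume y: "y \<in> carrier_vec (dim_col H)" and "H *\<^sub>v y = 0\<^sub>v (dim_row H)"
    hence Hy: "H *\<^sub>v y = 0\<^sub>v m" using Hc by auto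
    have "Hf *\<^sub>v y = \<Phi> *\<^sub>v (H *\<^sub>v y)" unfolding eq using \<Phi> Hc y by auto
    also have "\<dots> = 0\<^sub>v b" unfolding Hy using \<Phi> by simp
    finally show "y = 0\<^sub>v (dim_col H)" using ind y Hc by auto
  next
    fix x assume x: "x \<in> carrier_vec (dim_col G)" and "G *\<^sub>v x = 0\<^sub>v (dim_row G)"
    hence x: "x \<in> carrier_vec m" and Gx: "G *\<^sub>v x = 0\<^sub>v p" using G by auto
    have "L *\<^sub>v (\<Phi> *\<^sub>v x) = 0\<^sub>v a" using h2[OF x] Gx by auto
    from sp[OF _ this] \<Phi> x obtain y where y: "y \<in> carrier_vec k" "\<Phi> *\<^sub>v x = Hf *\<^sub>v y" by auto
    have "x = \<Psi> *\<^sub>v (\<Phi> *\<^sub>v x)" using h1 x by simp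
    also have "\<dots> = \<Psi> *\<^sub>v (Hf *\<^sub>v y)" using y by simp
    also have "\<dots> = H *\<^sub>v y" unfolding H_def using \<Psi> Hf y by simp
    finally show "\<exists>y\<in>carrier_vec (dim_col H). x = H *\<^sub>v y" using y Hc by auto
  qed
  thus "\<exists>H. H \<in> carrier_mat m k \<and> right_poly_basis G H \<and> Hf = \<Phi> * H" using Hc eq by blast
next
  assume "\<exists>H. H \<in> carrier_mat m k \<and> right_poly_basis G H \<and> Hf = \<Phi> * H"
  then obtain H where Hc: "H \<in> carrier_mat m k" and rb: "right_poly_basis G H" and eq: "Hf = \<Phi> * H" by auto
  hence pH: "poly_mat H" and GH: "G * H = 0\<^sub>m p k"
    and ind: "\<And>y. y \<in> carrier_vec k \<Longrightarrow> H *\<^sub>v y = 0\<^sub>v m \<Longrightarrow> y = 0\<^sub>v k"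
    and sp: "\<And>x. x \<in> carrier_vec m \<Longrightarrow> G *\<^sub>v x = 0\<^sub>v p \<Longrightarrow> \<exists>y \<in> carrier_vec k. x = H *\<^sub>v y"
    unfolding right_poly_basis_def using G Hc by auto
  have Gc: "G *\<^sub>v col H j = 0\<^sub>v p" if "j < k" for j
    using GH mat_zero_cols[OF G Hc] that by auto
  show "right_poly_basis L Hf" unfolding right_poly_basis_def
  proof (intro conjI ballI impI)
    show "poly_mat Hf" unfolding poly_mat_cols
    proof (intro allI impI)
      fix j assume "j < dim_col Hf"
      hence j: "j < k" using Hf by auto
      have "col Hf j = \<Phi> *\<^sub>v col H j" unfolding eq using col_mult2[OF \<Phi> Hc j] by simp
      moreover have "poly_vec (\<Phi> *\<^sub>v col H j)"
        by (rule h5[OF _ poly_vec_col[OF pH] Gc[OF j]], insert Hc j, auto)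
      ultimately show "poly_vec (col Hf j)" by simp
    qed
    show "dim_row Hf = dim_col L" using Hf L by auto
    have "L * Hf = 0\<^sub>m a k" unfolding mat_zero_cols[OF L Hf]
    proof (intro allI impI)
      fix j assume j: "j < k"
      have "col Hf j = \<Phi> *\<^sub>v col H j" unfolding eq using col_mult2[OF \<Phi> Hc j] by simp
      thus "L *\<^sub>v col Hf j = 0\<^sub>v a" using h2[of "col H j"] Gc[OF j] Hc j by auto
    qed
    thus "L * Hf = 0\<^sub>m (dim_row L) (dim_col Hf)" using L Hf by auto
  next
    fix y assume y: "y \<in> carrier_vec (dim_col Hf)" and "Hf *\<^sub>v y = 0\<^sub>v (dim_row Hf)"
    hence y: "y \<in> carrier_vec k" and Hy: "\<Phi> *\<^sub>v (H *\<^sub>v y) = 0\<^sub>v b" unfolding eq using Hf \<Phi> Hc by auto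
    have "H *\<^sub>v y = \<Psi> *\<^sub>v (\<Phi> *\<^sub>v (H *\<^sub>v y))" using h1 Hc y by simp
    also have "\<dots> = 0\<^sub>v m" unfolding Hy using \<Psi> by simp
    finally show "y = 0\<^sub>v (dim_col Hf)" using ind y Hf by auto
  next
    fix x assume x: "x \<in> carrier_vec (dim_col L)" and "L *\<^sub>v x = 0\<^sub>v (dim_row L)"
    hence x: "x \<in> carrier_vec b" and Lx: "L *\<^sub>v x = 0\<^sub>v a" using L by auto
    have xe: "\<Phi> *\<^sub>v (\<Psi> *\<^sub>v x) = x" by (rule h3[OF x Lx])
    have "G *\<^sub>v (\<Psi> *\<^sub>v x) = 0\<^sub>v p" using h2[of "\<Psi> *\<^sub>v x"] xe Lx \<Psi> x by auto
    from sp[OF _ this] \<Psi> x obtain y where y: "y \<in> carrier_vec k" "\<Psi> *\<^sub>v x = H *\<^sub>v y" by auto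
    have "x = Hf *\<^sub>v y" unfolding eq using xe y \<Phi> Hc by simp
    thus "\<exists>y\<in>carrier_vec (dim_col Hf). x = Hf *\<^sub>v y" using y Hf by auto
  qed
qed




lemma app_dim0: "w \<in> carrier_vec 0 \<Longrightarrow> v @\<^sub>v w = v" by (intro eq_vecI) auto
lemma zero_app: "0\<^sub>v (a+b) = (0\<^sub>v a @\<^sub>v 0\<^sub>v b :: 'a::zero vec)" by (intro eq_vecI) auto
lemma app_zero_iff: "v \<in> carrier_vec a \<Longrightarrow> (v @\<^sub>v w = 0\<^sub>v (a+b)) \<longleftrightarrow> (v = 0\<^sub>v a \<and> w = (0\<^sub>v b :: 'a::zero vec))"
  unfolding zero_app by (rule append_vec_eq) auto

lemma vadd_eq0: "a \<in> carrier_vec n \<Longrightarrow> b \<in> carrier_vec n \<Longrightarrow> a + b = 0\<^sub>v n \<Longrightarrow> a = - (b :: 'a::ab_group_add vec)"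
proof (intro eq_vecI)
  fix i assume ab: "a \<in> carrier_vec n" "b \<in> carrier_vec n" and e: "a + b = 0\<^sub>v n" and i: "i < dim_vec (- b)"
  have "(a + b) $ i = 0\<^sub>v n $ i" using e by simp
  hence "a $ i + b $ i = 0" using ab i by simp
  thus "a $ i = (- b) $ i" using ab i by (simp add: eq_neg_iff_add_eq_0)
qed auto

lemma poly_vec_app: "poly_vec (v @\<^sub>v w) \<longleftrightarrow> poly_vec v \<and> poly_vec w"
  unfolding poly_vec_def
proof safe
  fix i assume a: "\<forall>i<dim_vec (v @\<^sub>v w). isp ((v @\<^sub>v w) $ i)"
  { assume "i < dim_vec v" thus "isp (v $ i)" using a[rule_format, of i] by auto }
  { assume i: "i < dim_vec w" thus "isp (w $ i)" using a[rule_format, of "dim_vec v + i"] by auto }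
next
  fix i assume "\<forall>i<dim_vec v. isp (v $ i)" "\<forall>i<dim_vec w. isp (w $ i)" "i < dim_vec (v @\<^sub>v w)"
  thus "isp ((v @\<^sub>v w) $ i)" by (cases "i < dim_vec v") auto
qed

lemma poly_vec_zero[simp]: "poly_vec (0\<^sub>v n)" unfolding poly_vec_def by auto

lemma poly_four_block:
  assumes "poly_mat A" "poly_mat B" "poly_mat C" "poly_mat D"
    "A \<in> carrier_mat nr1 nc1" "B \<in> carrier_mat nr1 nc2" "C \<in> carrier_mat nr2 nc1" "D \<in> carrier_mat nr2 nc2"
  shows "poly_mat (four_block_mat A B C D)"
  using assms unfolding poly_mat_iff by auto

lemma col_append_rows: "X \<in> carrier_mat r1 c \<Longrightarrow> Y \<in> carrier_mat r2 c \<Longrightarrow> j < c \<Longrightarrow>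
  col (X @\<^sub>r Y) j = col X j @\<^sub>v col Y j"
  unfolding append_rows_def by (rule col_four_block_mat(1)) auto

lemma append_rows_mult:
  assumes X: "X \<in> carrier_mat r1 c" and Y: "Y \<in> carrier_mat r2 c" and H: "H \<in> carrier_mat c k"
  shows "(X @\<^sub>r Y) * H = (X * H) @\<^sub>r (Y * H)"
proof (rule mat_col_eqI)
  fix j assume "j < dim_col ((X * H) @\<^sub>r (Y * H))"
  hence j: "j < k" using X Y H by (simp add: append_rows_def)
  have XY: "X @\<^sub>r Y \<in> carrier_mat (r1 + r2) c" using X Y by auto
  have "col ((X @\<^sub>r Y) * H) j = (X @\<^sub>r Y) *\<^sub>v col H j" by (rule col_mult2[OF XY H j])
  also have "\<dots> = (X *\<^sub>v col H j) @\<^sub>v (Y *\<^sub>v col H j)" by (rule mat_mult_append[OF X Y], insert H, auto)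
  also have "\<dots> = col (X * H) j @\<^sub>v col (Y * H) j" using col_mult2[OF X H j] col_mult2[OF Y H j] by simp
  also have "\<dots> = col ((X * H) @\<^sub>r (Y * H)) j"
    by (rule col_append_rows[symmetric], insert X Y H j, auto)
  finally show "col ((X @\<^sub>r Y) * H) j = col ((X * H) @\<^sub>r (Y * H)) j" .
qed (insert X Y H, auto simp: append_rows_def)

lemma append_rows_eq_iff:
  assumes "X \<in> carrier_mat r1 c" "X' \<in> carrier_mat r1 c" "Y \<in> carrier_mat r2 c" "Y' \<in> carrier_mat r2 c"
  shows "(X @\<^sub>r Y = X' @\<^sub>r Y') \<longleftrightarrow> X = X' \<and> Y = Y'"
proof
  assume eq: "X @\<^sub>r Y = X' @\<^sub>r Y'"
  have "X = X'"
  proof (rule eq_matI)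
    fix i j assume "i < dim_row X'" "j < dim_col X'"
    thus "X $$ (i,j) = X' $$ (i,j)" using arg_cong[OF eq, of "\<lambda>M. M $$ (i,j)"] assms
      by (simp add: append_rows_def)
  qed (insert assms, auto)
  moreover have "Y = Y'"
  proof (rule eq_matI)
    fix i j assume "i < dim_row Y'" "j < dim_col Y'"
    thus "Y $$ (i,j) = Y' $$ (i,j)" using arg_cong[OF eq, of "\<lambda>M. M $$ (r1 + i,j)"] assms
      by (simp add: append_rows_def)
  qed (insert assms, auto)
  ultimately show "X = X' \<and> Y = Y'" ..
qed auto




lemma zero_mat_vec[simp]: "v \<in> carrier_vec c \<Longrightarrow> 0\<^sub>m r c *\<^sub>v v = (0\<^sub>v r :: 'a::semiring_0 vec)"
  by (intro eq_vecI) (auto simp: mult_mat_vec_def scalar_prod_def)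

lemma neg_add_cancel_mat: "X \<in> carrier_mat r c \<Longrightarrow> D \<in> carrier_mat r c \<Longrightarrow> - X + (D + X) = (D :: 'a::ab_group_add mat)"
  by (intro eq_matI) auto

lemma assoc3_vec:
  assumes A: "A \<in> carrier_mat n1 n2" and B: "B \<in> carrier_mat n2 n3" and C: "C \<in> carrier_mat n3 n4"
    and v: "v \<in> carrier_vec n4"
  shows "(A * B * C) *\<^sub>v v = A *\<^sub>v (B *\<^sub>v (C *\<^sub>v (v :: 'a :: semiring_0 vec)))"
proof -
  have AB: "A * B \<in> carrier_mat n1 n3" using A B by auto
  have Cv: "C *\<^sub>v v \<in> carrier_vec n3" using C v by auto
  show ?thesis unfolding assoc_mult_mat_vec[OF AB C v] assoc_mult_mat_vec[OF A B Cv] ..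
qed

lemma assoc_rev: "A \<in> carrier_mat n1 n2 \<Longrightarrow> B \<in> carrier_mat n2 n3 \<Longrightarrow> v \<in> carrier_vec n3 \<Longrightarrow>
  A *\<^sub>v (B *\<^sub>v v) = (A * B) *\<^sub>v v" by simp
lemma distr_rev: "A \<in> carrier_mat nr nc \<Longrightarrow> B \<in> carrier_mat nr nc \<Longrightarrow> v \<in> carrier_vec nc \<Longrightarrow>
  A *\<^sub>v v + B *\<^sub>v v = (A + B) *\<^sub>v (v :: 'a :: semiring_0 vec)" by (simp add: add_mult_distrib_mat_vec)

lemma spec_right:
  fixes A B C D G U Uinv V W Ainv H1 H2 :: "'a::field rf mat"
  assumes A: "A \<in> carrier_mat n n" and B: "B \<in> carrier_mat n (m+s)"
    and C: "C \<in> carrier_mat (p+s) n" and D: "D \<in> carrier_mat (p+s) (m+s)"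
    and pB: "poly_mat B" and pD: "poly_mat D"
    and Ai: "Ainv \<in> carrier_mat n n" "A * Ainv = 1\<^sub>m n" "Ainv * A = 1\<^sub>m n"
    and Q: "\<And>x. x \<in> carrier_vec n \<Longrightarrow> poly_vec (A *\<^sub>v x) \<Longrightarrow> poly_vec (C *\<^sub>v x) \<Longrightarrow> poly_vec x"
    and G: "G \<in> carrier_mat p m"
    and U: "U \<in> carrier_mat (p+s) (p+s)" and Ui: "Uinv \<in> carrier_mat (p+s) (p+s)" "Uinv * U = 1\<^sub>m (p+s)"
    and V: "V \<in> carrier_mat (m+s) (m+s)" "poly_mat V"
    and W: "W \<in> carrier_mat (m+s) (m+s)" "poly_mat W" "V * W = 1\<^sub>m (m+s)" "W * V = 1\<^sub>m (m+s)"
    and UV: "U * (D + C * Ainv * B) * V = diag2 G (1\<^sub>m s)"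
    and H1: "H1 \<in> carrier_mat n k" and H2: "H2 \<in> carrier_mat (m+s) k"
  shows "right_poly_basis (four_block_mat A B (-C) D) (H1 @\<^sub>r H2) \<longleftrightarrow>
     (\<exists>H. H \<in> carrier_mat m k \<and> right_poly_basis G H \<and> H2 = V * (H @\<^sub>r 0\<^sub>m s k)) \<and> H1 = -(Ainv * B) * H2"
proof -
  define L where "L = four_block_mat A B (-C) D"
  define K where "K = -(Ainv * B)"
  define Gh where "Gh = D + C * Ainv * B"
  define Pm where "Pm = (1\<^sub>m m @\<^sub>r 0\<^sub>m s m :: 'a rf mat)"
  define Phi where "Phi = (K * V * Pm) @\<^sub>r (V * Pm)"
  define Pt where "Pt = (four_block_mat (1\<^sub>m m) (0\<^sub>m m s) (0\<^sub>m 0 m) (0\<^sub>m 0 s) :: 'a rf mat)"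
  define Sel where "Sel = (four_block_mat (0\<^sub>m (m+s) n) (1\<^sub>m (m+s)) (0\<^sub>m 0 n) (0\<^sub>m 0 (m+s)) :: 'a rf mat)"
  define Psi where "Psi = Pt * W * Sel"
  have mC: "- C \<in> carrier_mat (p+s) n" using C by auto
  have Lc: "L \<in> carrier_mat (n + (p+s)) (n + (m+s))" unfolding L_def using A D by auto
  have Kc: "K \<in> carrier_mat n (m+s)" unfolding K_def using Ai B by auto
  have mCK: "- C * K \<in> carrier_mat (p+s) (m+s)" and CK: "C * K \<in> carrier_mat (p+s) (m+s)"
    using mC C Kc by auto
  have Ghc: "Gh \<in> carrier_mat (p+s) (m+s)" unfolding Gh_def using C Ai B D by auto
  have Pmc: "Pm \<in> carrier_mat (m+s) m" unfolding Pm_def by auto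
  have Phic: "Phi \<in> carrier_mat (n + (m+s)) m" unfolding Phi_def using Kc V Pmc by auto
  have Ptc: "Pt \<in> carrier_mat m (m+s)" unfolding Pt_def
    using four_block_carrier_mat[of "1\<^sub>m m :: 'a rf mat" m m "0\<^sub>m 0 s" 0 s] by auto
  have Selc: "Sel \<in> carrier_mat (m+s) (n+(m+s))" unfolding Sel_def
    using four_block_carrier_mat[of "0\<^sub>m (m+s) n :: 'a rf mat" "m+s" n "0\<^sub>m 0 (m+s)" 0 "m+s"] by auto
  have Psic: "Psi \<in> carrier_mat m (n+(m+s))" unfolding Psi_def using Ptc W Selc by auto
  have pPt: "poly_mat Pt" unfolding Pt_def poly_mat_iff by auto
  have pSel: "poly_mat Sel" unfolding Sel_def poly_mat_iff by auto
  have pPsi: "poly_mat Psi" unfolding Psi_def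
    by (rule poly_mat_mult[OF poly_mat_mult[OF pPt W(2)] pSel], insert W Ptc Selc, auto)
  have Pt_app: "Pt *\<^sub>v (a @\<^sub>v b) = a" if a: "a \<in> carrier_vec m" and b: "b \<in> carrier_vec s" for a b
  proof -
    have "Pt *\<^sub>v (a @\<^sub>v b) = (1\<^sub>m m *\<^sub>v a + 0\<^sub>m m s *\<^sub>v b) @\<^sub>v (0\<^sub>m 0 m *\<^sub>v a + 0\<^sub>m 0 s *\<^sub>v b)"
      unfolding Pt_def by (rule four_block_mat_mult_vec[OF _ _ _ _ a b], auto)
    also have "\<dots> = a"
    proof -
      have "0\<^sub>m 0 m *\<^sub>v a + 0\<^sub>m 0 s *\<^sub>v b \<in> carrier_vec 0" by (rule carrier_vecI) simp
      moreover have "1\<^sub>m m *\<^sub>v a + 0\<^sub>m m s *\<^sub>v b = a" using a b by simp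
      ultimately show ?thesis by (simp add: app_dim0)
    qed
    finally show ?thesis .
  qed
  have Sel_app: "Sel *\<^sub>v (a @\<^sub>v b) = b" if a: "a \<in> carrier_vec n" and b: "b \<in> carrier_vec (m+s)" for a b
  proof -
    have "Sel *\<^sub>v (a @\<^sub>v b) = (0\<^sub>m (m+s) n *\<^sub>v a + 1\<^sub>m (m+s) *\<^sub>v b) @\<^sub>v (0\<^sub>m 0 n *\<^sub>v a + 0\<^sub>m 0 (m+s) *\<^sub>v b)"
      unfolding Sel_def by (rule four_block_mat_mult_vec[OF _ _ _ _ a b], auto)
    also have "\<dots> = b"
    proof -
      have "0\<^sub>m 0 n *\<^sub>v a + 0\<^sub>m 0 (m+s) *\<^sub>v b \<in> carrier_vec 0" by (rule carrier_vecI) simp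
      moreover have "0\<^sub>m (m+s) n *\<^sub>v a + 1\<^sub>m (m+s) *\<^sub>v b = b" using a b by simp
      ultimately show ?thesis by (simp add: app_dim0)
    qed
    finally show ?thesis .
  qed
  have Pm_v: "Pm *\<^sub>v z = z @\<^sub>v 0\<^sub>v s" if z: "z \<in> carrier_vec m" for z
    unfolding Pm_def using mat_mult_append[of "1\<^sub>m m" m m "0\<^sub>m s m" s z] z by auto
  have L_app: "L *\<^sub>v (a @\<^sub>v b) = (A *\<^sub>v a + B *\<^sub>v b) @\<^sub>v (- C *\<^sub>v a + D *\<^sub>v b)"
    if a: "a \<in> carrier_vec n" and b: "b \<in> carrier_vec (m+s)" for a b
    unfolding L_def by (rule four_block_mat_mult_vec[OF A B mC D a b])
  have Phi_v: "Phi *\<^sub>v z = (K *\<^sub>v (V *\<^sub>v (z @\<^sub>v 0\<^sub>v s))) @\<^sub>v (V *\<^sub>v (z @\<^sub>v 0\<^sub>v s))"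
    if z: "z \<in> carrier_vec m" for z
  proof -
    have "Phi *\<^sub>v z = ((K * V * Pm) *\<^sub>v z) @\<^sub>v ((V * Pm) *\<^sub>v z)"
      unfolding Phi_def by (rule mat_mult_append[OF _ _ z], insert Kc V Pmc, auto)
    also have "(K * V * Pm) *\<^sub>v z = K *\<^sub>v (V *\<^sub>v (Pm *\<^sub>v z))"
    proof -
      have VP: "V * Pm \<in> carrier_mat (m+s) m" using V Pmc by auto
      show ?thesis using assoc_mult_mat_vec[OF Kc VP z] assoc_mult_mat_vec[OF V(1) Pmc z] Kc V Pmc
        assoc_mult_mat[OF Kc V(1) Pmc] by simp
    qed
    also have "(V * Pm) *\<^sub>v z = V *\<^sub>v (Pm *\<^sub>v z)" using V Pmc z by auto
    finally show ?thesis unfolding Pm_v[OF z] .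
  qed
  have Psi_v: "Psi *\<^sub>v (a @\<^sub>v b) = Pt *\<^sub>v (W *\<^sub>v b)" if a: "a \<in> carrier_vec n" and b: "b \<in> carrier_vec (m+s)" for a b
  proof -
    have ab: "a @\<^sub>v b \<in> carrier_vec (n + (m+s))" using a b by auto
    have "Psi *\<^sub>v (a @\<^sub>v b) = Pt *\<^sub>v (W *\<^sub>v (Sel *\<^sub>v (a @\<^sub>v b)))" unfolding Psi_def
      using assoc_mult_mat_vec[OF Ptc _ ab, of "W * Sel"] assoc_mult_mat_vec[OF W(1) Selc ab] W(1) Selc
        assoc_mult_mat[OF Ptc W(1) Selc] by simp
    thus ?thesis unfolding Sel_app[OF a b] .
  qed
  have AiB: "Ainv * B \<in> carrier_mat n (m+s)" using Ai B by auto
  have CAB: "C * (Ainv * B) = C * Ainv * B" by (rule assoc_mult_mat[symmetric, OF C Ai(1) B])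
  have mCAB: "- C * - (Ainv * B) = C * Ainv * B"
  proof -
    have "- C * - (Ainv * B) = - (- C * (Ainv * B))" by (rule uminus_mult_right_mat) (insert C AiB, auto)
    also have "- C * (Ainv * B) = - (C * (Ainv * B))" by (rule uminus_mult_left_mat) (insert C AiB, auto)
    finally show ?thesis unfolding CAB by simp
  qed
  have CmAB: "C * - (Ainv * B) = - (C * Ainv * B)"
    unfolding CAB[symmetric] by (rule uminus_mult_right_mat) (insert C AiB, auto)
  have AK: "A * K = - B" unfolding K_def
  proof -
    have "A * - (Ainv * B) = - (A * (Ainv * B))" by (rule uminus_mult_right_mat) (insert A AiB, auto)
    also have "A * (Ainv * B) = A * Ainv * B" by (rule assoc_mult_mat[symmetric, OF A Ai(1) B])
    finally show "A * - (Ainv * B) = - B" using Ai(2) B by simp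
  qed
  have CAB_c: "C * Ainv * B \<in> carrier_mat (p+s) (m+s)" using C Ai B by auto
  have CKD: "- C * K + D = Gh" unfolding K_def Gh_def mCAB by (rule comm_add_mat[OF CAB_c D])
  have CKG: "C * K + Gh = D" unfolding K_def Gh_def CmAB by (rule neg_add_cancel_mat[OF CAB_c D])
  have diag_app: "diag2 G (1\<^sub>m s) *\<^sub>v (a @\<^sub>v b) = (G *\<^sub>v a) @\<^sub>v b" if a: "a \<in> carrier_vec m" and b: "b \<in> carrier_vec s" for a b
  proof -
    have "diag2 G (1\<^sub>m s) *\<^sub>v (a @\<^sub>v b) = (G *\<^sub>v a + 0\<^sub>m p s *\<^sub>v b) @\<^sub>v (0\<^sub>m s m *\<^sub>v a + 1\<^sub>m s *\<^sub>v b)"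
    proof -
      have "diag2 G (1\<^sub>m s) = four_block_mat G (0\<^sub>m p s) (0\<^sub>m s m) (1\<^sub>m s)" unfolding diag2_def using G by auto
      thus ?thesis by (simp only:) (rule four_block_mat_mult_vec[OF G _ _ _ a b], auto)
    qed
    also have "\<dots> = (G *\<^sub>v a) @\<^sub>v b" using G a b by simp
    finally show ?thesis .
  qed
  have UGh: "U *\<^sub>v (Gh *\<^sub>v (V *\<^sub>v w)) = diag2 G (1\<^sub>m s) *\<^sub>v w" if w: "w \<in> carrier_vec (m+s)" for w
  proof -
    have "diag2 G (1\<^sub>m s) *\<^sub>v w = (U * Gh * V) *\<^sub>v w" using UV unfolding Gh_def by simp
    also have "\<dots> = U *\<^sub>v (Gh *\<^sub>v (V *\<^sub>v w))" by (rule assoc3_vec[OF U Ghc V(1) w])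
    finally show ?thesis by simp
  qed
  have Ginj: "Gh *\<^sub>v y = 0\<^sub>v (p+s) \<longleftrightarrow> U *\<^sub>v (Gh *\<^sub>v y) = 0\<^sub>v (p+s)" if y: "y \<in> carrier_vec (m+s)" for y
  proof
    assume "U *\<^sub>v (Gh *\<^sub>v y) = 0\<^sub>v (p+s)"
    hence "Uinv *\<^sub>v (U *\<^sub>v (Gh *\<^sub>v y)) = 0\<^sub>v (p+s)" using Ui by simp
    moreover have g: "Gh *\<^sub>v y \<in> carrier_vec (p+s)" using Ghc y by auto
    moreover have "Uinv *\<^sub>v (U *\<^sub>v (Gh *\<^sub>v y)) = Gh *\<^sub>v y"
      unfolding assoc_rev[OF Ui(1) U g] Ui(2) using g by simp
    ultimately show "Gh *\<^sub>v y = 0\<^sub>v (p+s)" by simp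
  qed (insert U, simp)
  have h2: "L *\<^sub>v (Phi *\<^sub>v z) = 0\<^sub>v (n + (p+s)) \<longleftrightarrow> G *\<^sub>v z = 0\<^sub>v p" if z: "z \<in> carrier_vec m" for z
  proof -
    define y where "y = V *\<^sub>v (z @\<^sub>v 0\<^sub>v s)"
    have y: "y \<in> carrier_vec (m+s)" unfolding y_def using V z by auto
    have Ky: "K *\<^sub>v y \<in> carrier_vec n" using Kc y by auto
    have "L *\<^sub>v (Phi *\<^sub>v z) = (A *\<^sub>v (K *\<^sub>v y) + B *\<^sub>v y) @\<^sub>v (- C *\<^sub>v (K *\<^sub>v y) + D *\<^sub>v y)"
      unfolding Phi_v[OF z] y_def[symmetric] by (rule L_app[OF Ky y])
    also have "A *\<^sub>v (K *\<^sub>v y) + B *\<^sub>v y = 0\<^sub>v n"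
    proof -
      have "A *\<^sub>v (K *\<^sub>v y) = - (B *\<^sub>v y)" unfolding assoc_rev[OF A Kc y] AK using B y by simp
      thus ?thesis using B y by simp
    qed
    also have "- C *\<^sub>v (K *\<^sub>v y) + D *\<^sub>v y = Gh *\<^sub>v y"
      unfolding assoc_rev[OF mC Kc y] distr_rev[OF mCK D y] CKD ..
    finally have "L *\<^sub>v (Phi *\<^sub>v z) = 0\<^sub>v n @\<^sub>v Gh *\<^sub>v y" .
    hence "L *\<^sub>v (Phi *\<^sub>v z) = 0\<^sub>v (n + (p+s)) \<longleftrightarrow> Gh *\<^sub>v y = 0\<^sub>v (p+s)" by (simp add: app_zero_iff)
    also have "\<dots> \<longleftrightarrow> U *\<^sub>v (Gh *\<^sub>v y) = 0\<^sub>v (p+s)" by (rule Ginj[OF y])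
    also have "U *\<^sub>v (Gh *\<^sub>v y) = (G *\<^sub>v z) @\<^sub>v 0\<^sub>v s" unfolding y_def using z
      by (simp add: UGh diag_app)
    also have "\<dots> = 0\<^sub>v (p+s) \<longleftrightarrow> G *\<^sub>v z = 0\<^sub>v p" using G z by (simp add: app_zero_iff)
    finally show ?thesis .
  qed
  have h1: "Psi *\<^sub>v (Phi *\<^sub>v z) = z" if z: "z \<in> carrier_vec m" for z
  proof -
    define y where "y = V *\<^sub>v (z @\<^sub>v 0\<^sub>v s)"
    have y: "y \<in> carrier_vec (m+s)" unfolding y_def using V z by auto
    have "Psi *\<^sub>v (Phi *\<^sub>v z) = Pt *\<^sub>v (W *\<^sub>v y)" unfolding Phi_v[OF z] y_def[symmetric]
      by (rule Psi_v, insert Kc y, auto)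
    also have "W *\<^sub>v y = z @\<^sub>v 0\<^sub>v s"
    proof -
      have zz: "z @\<^sub>v 0\<^sub>v s \<in> carrier_vec (m+s)" using z by auto
      show ?thesis unfolding y_def assoc_rev[OF W(1) V(1) zz] W(4) using zz by simp
    qed
    finally show ?thesis using Pt_app z by simp
  qed
  have h3: "Phi *\<^sub>v (Psi *\<^sub>v x) = x" if x: "x \<in> carrier_vec (n + (m+s))" and Lx: "L *\<^sub>v x = 0\<^sub>v (n + (p+s))" for x
  proof -
    define x1 where "x1 = vec_first x n"
    define x2 where "x2 = vec_last x (m+s)"
    have x12: "x = x1 @\<^sub>v x2" unfolding x1_def x2_def using x by simp
    have x1: "x1 \<in> carrier_vec n" and x2: "x2 \<in> carrier_vec (m+s)" unfolding x1_def x2_def by auto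
    have "(A *\<^sub>v x1 + B *\<^sub>v x2) @\<^sub>v (- C *\<^sub>v x1 + D *\<^sub>v x2) = 0\<^sub>v (n + (p+s))"
      using Lx unfolding x12 L_app[OF x1 x2] .
    moreover have c1: "A *\<^sub>v x1 + B *\<^sub>v x2 \<in> carrier_vec n" using A x1 B x2 by auto
    ultimately have e12: "A *\<^sub>v x1 + B *\<^sub>v x2 = 0\<^sub>v n \<and> - C *\<^sub>v x1 + D *\<^sub>v x2 = 0\<^sub>v (p+s)"
      using app_zero_iff[OF c1] by blast
    hence e1: "A *\<^sub>v x1 + B *\<^sub>v x2 = 0\<^sub>v n" and e2: "- C *\<^sub>v x1 + D *\<^sub>v x2 = 0\<^sub>v (p+s)" by auto
    have "A *\<^sub>v x1 = - (B *\<^sub>v x2)" by (rule vadd_eq0[OF _ _ e1], insert A x1 B x2, auto)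
    hence Ax1: "A *\<^sub>v x1 = (- B) *\<^sub>v x2" using B x2 by simp
    have x1K: "x1 = K *\<^sub>v x2"
    proof -
      have "x1 = (Ainv * A) *\<^sub>v x1" using Ai x1 by simp
      also have "\<dots> = Ainv *\<^sub>v ((- B) *\<^sub>v x2)" unfolding assoc_mult_mat_vec[OF Ai(1) A x1] Ax1 ..
      also have "\<dots> = (Ainv * (- B)) *\<^sub>v x2" by (rule assoc_rev[OF Ai(1) _ x2], insert B, auto)
      also have "Ainv * (- B) = K" unfolding K_def using Ai B by simp
      finally show ?thesis .
    qed
    have Ghx2: "Gh *\<^sub>v x2 = 0\<^sub>v (p+s)"
    proof -
      have "Gh *\<^sub>v x2 = - C *\<^sub>v (K *\<^sub>v x2) + D *\<^sub>v x2"
        unfolding assoc_rev[OF mC Kc x2] distr_rev[OF mCK D x2] CKD ..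
      thus ?thesis using e2 x1K by simp
    qed
    define w where "w = W *\<^sub>v x2"
    have w: "w \<in> carrier_vec (m+s)" unfolding w_def using W x2 by auto
    define w1 where "w1 = vec_first w m"
    define w2 where "w2 = vec_last w s"
    have w12: "w = w1 @\<^sub>v w2" unfolding w1_def w2_def using w by simp
    have w1: "w1 \<in> carrier_vec m" and w2: "w2 \<in> carrier_vec s" unfolding w1_def w2_def by auto
    have Vw: "V *\<^sub>v w = x2" unfolding w_def assoc_rev[OF V(1) W(1) x2] W(3) using x2 by simp
    have "(G *\<^sub>v w1) @\<^sub>v w2 = U *\<^sub>v (Gh *\<^sub>v (V *\<^sub>v w))" using UGh[OF w] diag_app[OF w1 w2] unfolding w12 by simp
    also have "\<dots> = 0\<^sub>v (p+s)" unfolding Vw Ghx2 using U by simp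
    finally have w20: "w2 = 0\<^sub>v s" using G w1 by (simp add: app_zero_iff)
    have "Psi *\<^sub>v x = w1" unfolding x12 Psi_v[OF x1 x2] w_def[symmetric] w12 by (rule Pt_app[OF w1 w2])
    moreover have "Phi *\<^sub>v w1 = x" unfolding Phi_v[OF w1] w20[symmetric] w12[symmetric] Vw x12 x1K ..
    ultimately show ?thesis by simp
  qed
  have h5: "poly_vec (Phi *\<^sub>v z)" if z: "z \<in> carrier_vec m" and pz: "poly_vec z" and Gz: "G *\<^sub>v z = 0\<^sub>v p" for z
  proof -
    define y where "y = V *\<^sub>v (z @\<^sub>v 0\<^sub>v s)"
    have y: "y \<in> carrier_vec (m+s)" unfolding y_def using V z by auto
    have py: "poly_vec y" unfolding y_def by (rule poly_vec_mult[OF V(2)], insert pz z V, auto simp: poly_vec_app)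
    have Ghy: "Gh *\<^sub>v y = 0\<^sub>v (p+s)"
    proof -
      have zz: "z @\<^sub>v 0\<^sub>v s \<in> carrier_vec (m+s)" using z by auto
      have "U *\<^sub>v (Gh *\<^sub>v y) = (G *\<^sub>v z) @\<^sub>v 0\<^sub>v s" unfolding y_def UGh[OF zz] by (rule diag_app[OF z], auto)
      hence "U *\<^sub>v (Gh *\<^sub>v y) = 0\<^sub>v (p+s)" unfolding Gz zero_app[of p s] .
      thus ?thesis using Ginj[OF y] by simp
    qed
    have "poly_vec (K *\<^sub>v y)"
    proof (rule Q)
      show "K *\<^sub>v y \<in> carrier_vec n" using Kc y by auto
      have "A *\<^sub>v (K *\<^sub>v y) = (- B) *\<^sub>v y" unfolding assoc_rev[OF A Kc y] AK ..
      thus "poly_vec (A *\<^sub>v (K *\<^sub>v y))" using poly_vec_mult[OF poly_mat_uminus[OF pB] py] B y by simp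
      have "D *\<^sub>v y = C *\<^sub>v (K *\<^sub>v y) + Gh *\<^sub>v y"
        unfolding assoc_rev[OF C Kc y] distr_rev[OF CK Ghc y] CKG ..
      hence "C *\<^sub>v (K *\<^sub>v y) = D *\<^sub>v y" using Ghy C Kc y by simp
      thus "poly_vec (C *\<^sub>v (K *\<^sub>v y))" using poly_vec_mult[OF pD py] D y by simp
    qed
    thus ?thesis unfolding Phi_v[OF z] y_def[symmetric] poly_vec_app using py by simp
  qed
  have HH: "H1 @\<^sub>r H2 \<in> carrier_mat (n + (m+s)) k" using H1 H2 by auto
  have abs: "right_poly_basis L (H1 @\<^sub>r H2) \<longleftrightarrow> (\<exists>H. H \<in> carrier_mat m k \<and> right_poly_basis G H \<and> H1 @\<^sub>r H2 = Phi * H)"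
    by (rule abstract_basis[OF Lc G Phic Psic h1 pPsi h2 h3 h5 HH])
  have PhiH: "H1 @\<^sub>r H2 = Phi * H \<longleftrightarrow> H2 = V * (H @\<^sub>r 0\<^sub>m s k) \<and> H1 = K * H2" if Hc: "H \<in> carrier_mat m k" for H
  proof -
    have PmH: "Pm * H = H @\<^sub>r 0\<^sub>m s k" unfolding Pm_def using Hc
      by (simp add: append_rows_mult[of _ m m _ s])
    have "Phi * H = ((K * V * Pm) * H) @\<^sub>r ((V * Pm) * H)"
      unfolding Phi_def by (rule append_rows_mult, insert Kc V Pmc Hc, auto)
    also have "(V * Pm) * H = V * (H @\<^sub>r 0\<^sub>m s k)" using V Pmc Hc by (simp add: PmH[symmetric])
    also have "(K * V * Pm) * H = K * (V * (H @\<^sub>r 0\<^sub>m s k))"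
    proof -
      have KV: "K * V \<in> carrier_mat n (m+s)" using Kc V by auto
      have PH: "Pm * H \<in> carrier_mat (m+s) k" using Pmc Hc by auto
      have "(K * V * Pm) * H = (K * V) * (Pm * H)" by (rule assoc_mult_mat[OF KV Pmc Hc])
      also have "\<dots> = K * (V * (Pm * H))" by (rule assoc_mult_mat[OF Kc V(1) PH])
      finally show ?thesis unfolding PmH .
    qed
    finally have "Phi * H = (K * (V * (H @\<^sub>r 0\<^sub>m s k))) @\<^sub>r (V * (H @\<^sub>r 0\<^sub>m s k))" .
    hence "H1 @\<^sub>r H2 = Phi * H \<longleftrightarrow> H1 = K * (V * (H @\<^sub>r 0\<^sub>m s k)) \<and> H2 = V * (H @\<^sub>r 0\<^sub>m s k)"
      using append_rows_eq_iff[OF H1 _ H2, of "K * (V * (H @\<^sub>r 0\<^sub>m s k))" "V * (H @\<^sub>r 0\<^sub>m s k)"] Kc V Hc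
      by auto
    thus ?thesis by auto
  qed
  show ?thesis unfolding L_def[symmetric] abs K_def[symmetric] using PhiH by blast
qed




lemma unimodular_transpose:
  assumes "unimodular M" shows "unimodular (transpose_mat M)"
proof -
  have u: "poly_mat M \<and> dim_row M = dim_col M \<and> (\<exists>W. poly_mat W \<and> W \<in> carrier_mat (dim_row M) (dim_row M) \<and>
          M * W = 1\<^sub>m (dim_row M) \<and> W * M = 1\<^sub>m (dim_row M))"
    using assms unfolding unimodular_def .
  note M1 = conjunct1[OF u]
  note M2 = conjunct1[OF conjunct2[OF u]]
  note ex = conjunct2[OF conjunct2[OF u]]
  have M: "poly_mat M" "dim_row M = dim_col M" by (rule M1, rule M2)
  from ex obtain W where Wall: "poly_mat W \<and> W \<in> carrier_mat (dim_row M) (dim_row M) \<and>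
          M * W = 1\<^sub>m (dim_row M) \<and> W * M = 1\<^sub>m (dim_row M)" by (rule exE)
  have W: "poly_mat W" "W \<in> carrier_mat (dim_row M) (dim_row M)"
    "M * W = 1\<^sub>m (dim_row M)" "W * M = 1\<^sub>m (dim_row M)"
    using Wall by simp_all
  have Mc: "M \<in> carrier_mat (dim_row M) (dim_row M)" unfolding carrier_mat_def using M(2) by simp
  have e1: "transpose_mat M * transpose_mat W = 1\<^sub>m (dim_row M)"
    unfolding transpose_mult[OF W(2) Mc, symmetric] W(4) by (rule transpose_one)
  have e2: "transpose_mat W * transpose_mat M = 1\<^sub>m (dim_row M)"
    unfolding transpose_mult[OF Mc W(2), symmetric] W(3) by (rule transpose_one)
  have d: "dim_row (transpose_mat M) = dim_row M" using M(2) by simp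
  have pt1: "poly_mat (transpose_mat M)" by (rule poly_mat_transpose[OF M(1)])
  have pt2: "poly_mat (transpose_mat W)" by (rule poly_mat_transpose[OF W(1)])
  have Wt: "transpose_mat W \<in> carrier_mat (dim_row M) (dim_row M)" using W(2) by auto
  show ?thesis unfolding unimodular_def d
    by (intro conjI exI[of _ "transpose_mat W"]) (use pt1 pt2 Wt e1 e2 M(2) in auto)
qed

lemma left_to_right_coprime:
  assumes A: "A \<in> carrier_mat n n" and B: "B \<in> carrier_mat n q" and lc: "left_coprime A B"
  shows "right_coprime (transpose_mat A) (transpose_mat B)"
  unfolding right_coprime_def
proof (intro allI impI, elim conjE)
  fix X A' C' assume pX: "poly_mat X" and pA': "poly_mat A'" and pC': "poly_mat C'"
    and X: "X \<in> carrier_mat (dim_col (transpose_mat A)) (dim_col (transpose_mat A))"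
    and A': "A' \<in> carrier_mat (dim_row (transpose_mat A)) (dim_col (transpose_mat A))"
    and C': "C' \<in> carrier_mat (dim_row (transpose_mat B)) (dim_col (transpose_mat A))"
    and eA: "transpose_mat A = A' * X" and eB: "transpose_mat B = C' * X"
  have X: "X \<in> carrier_mat n n" and A': "A' \<in> carrier_mat n n" and C': "C' \<in> carrier_mat q n"
    using X A' C' A B by auto
  have "A = transpose_mat X * transpose_mat A'"
    using arg_cong[OF eA, of transpose_mat] transpose_mult[OF A' X] by simp
  moreover have "B = transpose_mat X * transpose_mat C'"
    using arg_cong[OF eB, of transpose_mat] transpose_mult[OF C' X] by simp
  ultimately have "unimodular (transpose_mat X)"
    using lc[unfolded left_coprime_def, rule_format, of "transpose_mat X" "transpose_mat A'" "transpose_mat C'"]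
      pX pA' pC' X A' C' A B by (auto simp: poly_mat_transpose)
  from unimodular_transpose[OF this] show "unimodular X" by simp
qed

lemma poly_vec_uminus: "poly_vec v \<Longrightarrow> poly_vec (- v)"
  unfolding poly_vec_def by auto

theorem theorem4p3:
  fixes G :: "'a::field rf mat"
    and A1 A0 B1 B0 C1 C0 D1 D0 :: "'a mat"
    and U V :: "'a rf mat"
    and n p m s :: nat
  assumes G: "G \<in> carrier_mat p m"
    and A: "A1 \<in> carrier_mat n n" "A0 \<in> carrier_mat n n"
    and B: "B1 \<in> carrier_mat n (m + s)" "B0 \<in> carrier_mat n (m + s)"
    and C: "C1 \<in> carrier_mat (p + s) n" "C0 \<in> carrier_mat (p + s) n"
    and D: "D1 \<in> carrier_mat (p + s) (m + s)" "D0 \<in> carrier_mat (p + s) (m + s)"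
    and lin: "linearization G A1 A0 B1 B0 C1 C0 D1 D0"
    and U: "U \<in> carrier_mat (p + s) (p + s)" "unimodular U"
    and V: "V \<in> carrier_mat (m + s) (m + s)" "unimodular V"
    and UV: "U * transfer (pencil A1 A0) (pencil B1 B0) (pencil C1 C0) (pencil D1 D0) * V
             = diag2 G (1\<^sub>m s)"
  shows
   "(\<forall>k H1 H2. H1 \<in> carrier_mat n k \<longrightarrow> H2 \<in> carrier_mat (m + s) k \<longrightarrow>
      (right_poly_basis (four_block_mat (pencil A1 A0) (pencil B1 B0) (- pencil C1 C0) (pencil D1 D0))
                        (H1 @\<^sub>r H2)
       \<longleftrightarrow> (\<exists>H. H \<in> carrier_mat m k \<and> right_poly_basis G H \<and> H2 = V * (H @\<^sub>r 0\<^sub>m s k)) \<and>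
           H1 = - (minv (pencil A1 A0) * pencil B1 B0) * H2))
    \<and>
    (\<forall>k H1 H2. H1 \<in> carrier_mat n k \<longrightarrow> H2 \<in> carrier_mat (p + s) k \<longrightarrow>
      (left_poly_basis (four_block_mat (pencil A1 A0) (pencil B1 B0) (- pencil C1 C0) (pencil D1 D0))
                       (H1 @\<^sub>r H2)
       \<longleftrightarrow> (\<exists>H. H \<in> carrier_mat p k \<and> left_poly_basis G H \<and> H2 = transpose_mat U * (H @\<^sub>r 0\<^sub>m s k)) \<and>
           H1 = transpose_mat (pencil C1 C0 * minv (pencil A1 A0)) * H2))"
proof -
  define AA where "AA = pencil A1 A0"
  define BB where "BB = pencil B1 B0"
  define CC where "CC = pencil C1 C0"
  define DD where "DD = pencil D1 D0"
  define Ai where "Ai = minv AA"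
  have AA: "AA \<in> carrier_mat n n" unfolding AA_def pencil_def using A by auto
  have BB: "BB \<in> carrier_mat n (m+s)" unfolding BB_def pencil_def using B by auto
  have CC: "CC \<in> carrier_mat (p+s) n" unfolding CC_def pencil_def using C by auto
  have DD: "DD \<in> carrier_mat (p+s) (m+s)" unfolding DD_def pencil_def using D by auto
  have pA: "poly_mat AA" and pB: "poly_mat BB" and pC: "poly_mat CC" and pD: "poly_mat DD"
    unfolding AA_def BB_def CC_def DD_def by (rule poly_mat_pencil)+
  from lin have mp: "minimal_psm AA BB CC DD" unfolding linearization_def AA_def BB_def CC_def DD_def by (rule conjunct1)
  hence detA: "det AA \<noteq> 0" and lcop: "left_coprime AA BB" and rcop: "right_coprime AA CC"
    unfolding minimal_psm_def by auto
  have "AA \<in> Units (ring_mat TYPE('a rf) n undefined)" by (rule det_non_zero_imp_unit[OF AA detA])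
  hence "mat_inverse AA \<noteq> None" using mat_inverse(1)[OF AA, of undefined] by auto
  then obtain Bi where "mat_inverse AA = Some Bi" by auto
  from mat_inverse(2)[OF AA this] this have Ai: "Ai \<in> carrier_mat n n" "AA * Ai = 1\<^sub>m n" "Ai * AA = 1\<^sub>m n"
    unfolding Ai_def minv_def by auto
  from U(2) obtain Uw where Uw: "poly_mat Uw" "Uw \<in> carrier_mat (p+s) (p+s)" "U * Uw = 1\<^sub>m (p+s)" "Uw * U = 1\<^sub>m (p+s)"
    and pU: "poly_mat U" unfolding unimodular_def using U(1) by auto
  from V(2) obtain Vw where Vw: "poly_mat Vw" "Vw \<in> carrier_mat (m+s) (m+s)" "V * Vw = 1\<^sub>m (m+s)" "Vw * V = 1\<^sub>m (m+s)"
    and pV: "poly_mat V" unfolding unimodular_def using V(1) by auto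
  have UV': "U * (DD + CC * Ai * BB) * V = diag2 G (1\<^sub>m s)"
    using UV unfolding transfer_def AA_def BB_def CC_def DD_def Ai_def .
  have QA: "poly_vec x" if "x \<in> carrier_vec n" "poly_vec (AA *\<^sub>v x)" "poly_vec (CC *\<^sub>v x)" for x
    by (rule key_coprime[OF AA CC pA pC rcop that])
  have part1: "\<forall>k H1 H2. H1 \<in> carrier_mat n k \<longrightarrow> H2 \<in> carrier_mat (m + s) k \<longrightarrow>
      (right_poly_basis (four_block_mat AA BB (- CC) DD) (H1 @\<^sub>r H2)
       \<longleftrightarrow> (\<exists>H. H \<in> carrier_mat m k \<and> right_poly_basis G H \<and> H2 = V * (H @\<^sub>r 0\<^sub>m s k)) \<and>
           H1 = - (Ai * BB) * H2)"
    by (intro allI impI, rule spec_right[OF AA BB CC DD pB pD Ai QA G U(1) Uw(2) Uw(4) V(1) pV Vw(2) Vw(1) Vw(3) Vw(4) UV'])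
  (* part 2 via transposition *)
  define At where "At = transpose_mat AA"
  define Bt where "Bt = - transpose_mat CC"
  define Ct where "Ct = - transpose_mat BB"
  define Dt where "Dt = transpose_mat DD"
  define Ait where "Ait = transpose_mat Ai"
  have At: "At \<in> carrier_mat n n" unfolding At_def using AA by auto
  have Bt: "Bt \<in> carrier_mat n (p+s)" unfolding Bt_def using CC by auto
  have Ct: "Ct \<in> carrier_mat (m+s) n" unfolding Ct_def using BB by auto
  have Dt: "Dt \<in> carrier_mat (m+s) (p+s)" unfolding Dt_def using DD by auto
  have pBt: "poly_mat Bt" unfolding Bt_def by (rule poly_mat_uminus[OF poly_mat_transpose[OF pC]])
  have pDt: "poly_mat Dt" unfolding Dt_def by (rule poly_mat_transpose[OF pD])
  have Ait: "Ait \<in> carrier_mat n n" "At * Ait = 1\<^sub>m n" "Ait * At = 1\<^sub>m n"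
    unfolding Ait_def At_def using Ai AA
    by (auto simp: transpose_mult[symmetric])
  have rcopt: "right_coprime At (transpose_mat BB)" unfolding At_def
    by (rule left_to_right_coprime[OF AA BB lcop])
  have QAt: "poly_vec x" if x: "x \<in> carrier_vec n" and h1: "poly_vec (At *\<^sub>v x)" and h2: "poly_vec (Ct *\<^sub>v x)" for x
  proof (rule key_coprime[OF At _ _ _ rcopt x h1])
    show "transpose_mat BB \<in> carrier_mat (m+s) n" using BB by auto
    show "poly_mat At" unfolding At_def by (rule poly_mat_transpose[OF pA])
    show "poly_mat (transpose_mat BB)" by (rule poly_mat_transpose[OF pB])
    have "Ct *\<^sub>v x = - (transpose_mat BB *\<^sub>v x)" unfolding Ct_def using x BB by simp
    hence "transpose_mat BB *\<^sub>v x = - (Ct *\<^sub>v x)" by simp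
    thus "poly_vec (transpose_mat BB *\<^sub>v x)" using poly_vec_uminus[OF h2] by simp
  qed
  have Gt: "transpose_mat G \<in> carrier_mat m p" using G by auto
  have Vt: "transpose_mat V \<in> carrier_mat (m+s) (m+s)" using V by auto
  have Vwt: "transpose_mat Vw \<in> carrier_mat (m+s) (m+s)" "transpose_mat Vw * transpose_mat V = 1\<^sub>m (m+s)"
    using Vw V by (auto simp: transpose_mult[symmetric])
  have Ut: "transpose_mat U \<in> carrier_mat (p+s) (p+s)" using U by auto
  have pUt: "poly_mat (transpose_mat U)" by (rule poly_mat_transpose[OF pU])
  have Uwt: "transpose_mat Uw \<in> carrier_mat (p+s) (p+s)" "poly_mat (transpose_mat Uw)"
    "transpose_mat U * transpose_mat Uw = 1\<^sub>m (p+s)" "transpose_mat Uw * transpose_mat U = 1\<^sub>m (p+s)"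
    using Uw U by (auto simp: transpose_mult[symmetric] poly_mat_transpose)
  have UVt: "transpose_mat V * (Dt + Ct * Ait * Bt) * transpose_mat U = diag2 (transpose_mat G) (1\<^sub>m s)"
  proof -
    have Gh: "DD + CC * Ai * BB \<in> carrier_mat (p+s) (m+s)" using DD CC Ai BB by auto
    have e1: "Ct * Ait * Bt = transpose_mat (CC * Ai * BB)"
    proof -
      have "transpose_mat (CC * Ai * BB) = transpose_mat BB * transpose_mat (CC * Ai)"
        using transpose_mult[of "CC * Ai" "p+s" n BB "m+s"] CC Ai BB by auto
      also have "transpose_mat (CC * Ai) = Ait * transpose_mat CC"
        unfolding Ait_def using transpose_mult[OF CC Ai(1)] .
      finally have "transpose_mat (CC * Ai * BB) = transpose_mat BB * (Ait * transpose_mat CC)" .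
      moreover have "Ct * Ait * Bt = transpose_mat BB * Ait * transpose_mat CC"
        unfolding Ct_def Bt_def using BB Ait CC by simp
      ultimately show ?thesis using BB Ait CC by (simp add: assoc_mult_mat)
    qed
    have e2: "Dt + Ct * Ait * Bt = transpose_mat (DD + CC * Ai * BB)"
      unfolding e1 Dt_def using transpose_add[of DD "p+s" "m+s" "CC * Ai * BB"] DD CC Ai BB by auto
    have "transpose_mat (U * (DD + CC * Ai * BB) * V) = transpose_mat V * transpose_mat (DD + CC * Ai * BB) * transpose_mat U"
    proof -
      have UG: "U * (DD + CC * Ai * BB) \<in> carrier_mat (p+s) (m+s)" using U Gh by auto
      have "transpose_mat (U * (DD + CC * Ai * BB) * V) = transpose_mat V * transpose_mat (U * (DD + CC * Ai * BB))"
        by (rule transpose_mult[OF UG V(1)])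
      also have "transpose_mat (U * (DD + CC * Ai * BB)) = transpose_mat (DD + CC * Ai * BB) * transpose_mat U"
        by (rule transpose_mult[OF U(1) Gh])
      finally show ?thesis using V Gh U by (simp add: assoc_mult_mat)
    qed
    also have "transpose_mat (U * (DD + CC * Ai * BB) * V) = transpose_mat (diag2 G (1\<^sub>m s))" using UV' by simp
    also have "\<dots> = diag2 (transpose_mat G) (1\<^sub>m s)" unfolding diag2_def
      using transpose_four_block_mat[of G p m "0\<^sub>m p s" s "0\<^sub>m s m" s "1\<^sub>m s"] G by auto
    finally show ?thesis unfolding e2 by simp
  qed
  have part2: "\<forall>k H1 H2. H1 \<in> carrier_mat n k \<longrightarrow> H2 \<in> carrier_mat (p + s) k \<longrightarrow>
      (right_poly_basis (four_block_mat At Bt (- Ct) Dt) (H1 @\<^sub>r H2)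
       \<longleftrightarrow> (\<exists>H. H \<in> carrier_mat p k \<and> right_poly_basis (transpose_mat G) H \<and> H2 = transpose_mat U * (H @\<^sub>r 0\<^sub>m s k)) \<and>
           H1 = - (Ait * Bt) * H2)"
    by (intro allI impI, rule spec_right[OF At Bt Ct Dt pBt pDt Ait QAt Gt Vt Vwt(1) Vwt(2) Ut pUt Uwt(1) Uwt(2) Uwt(3) Uwt(4) UVt])
  have Lt: "transpose_mat (four_block_mat AA BB (- CC) DD) = four_block_mat At Bt (- Ct) Dt"
    unfolding At_def Bt_def Ct_def Dt_def
    using transpose_four_block_mat[of AA n n BB "m+s" "- CC" "p+s" DD] AA BB CC DD by (simp add: transpose_uminus)
  have Ht: "- (Ait * Bt) = transpose_mat (CC * Ai)"
  proof -
    have "Ait * Bt = - (Ait * transpose_mat CC)" unfolding Bt_def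
      by (rule uminus_mult_right_mat) (insert Ait CC, auto)
    moreover have "transpose_mat (CC * Ai) = Ait * transpose_mat CC" unfolding Ait_def by (rule transpose_mult[OF CC Ai(1)])
    ultimately show ?thesis by simp
  qed
  show ?thesis
  proof (intro conjI)
    show "\<forall>k H1 H2. H1 \<in> carrier_mat n k \<longrightarrow> H2 \<in> carrier_mat (m + s) k \<longrightarrow>
      (right_poly_basis (four_block_mat (pencil A1 A0) (pencil B1 B0) (- pencil C1 C0) (pencil D1 D0))
                        (H1 @\<^sub>r H2)
       \<longleftrightarrow> (\<exists>H. H \<in> carrier_mat m k \<and> right_poly_basis G H \<and> H2 = V * (H @\<^sub>r 0\<^sub>m s k)) \<and>
           H1 = - (minv (pencil A1 A0) * pencil B1 B0) * H2)"
      using part1 unfolding AA_def BB_def CC_def DD_def Ai_def .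
    show "\<forall>k H1 H2. H1 \<in> carrier_mat n k \<longrightarrow> H2 \<in> carrier_mat (p + s) k \<longrightarrow>
      (left_poly_basis (four_block_mat (pencil A1 A0) (pencil B1 B0) (- pencil C1 C0) (pencil D1 D0))
                       (H1 @\<^sub>r H2)
       \<longleftrightarrow> (\<exists>H. H \<in> carrier_mat p k \<and> left_poly_basis G H \<and> H2 = transpose_mat U * (H @\<^sub>r 0\<^sub>m s k)) \<and>
           H1 = transpose_mat (pencil C1 C0 * minv (pencil A1 A0)) * H2)"
      using part2 unfolding left_poly_basis_def AA_def[symmetric] BB_def[symmetric] CC_def[symmetric]
        DD_def[symmetric] Ai_def[symmetric] Lt Ht[symmetric] .
  qed
qed


end
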